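(* Let $\tilde{\mathbb{I}}=\{\langle \mu,\nu\rangle\in[0,1]^2 \mid \mu+\nu\le 1\}$, equipped with the subspace topology inherited from $\mathbb{R}^2$. There is no continuous function $f:\tilde{\mathbb{I}}\to\mathbb{R}$ satisfying both of the following conditions: (1) $f$ is injective, i.e., for all $\alpha,\beta\in\tilde{\mathbb{I}}$ with $\alpha\neq\beta$, $f(\alpha)\neq f(\beta)$; (2) $f$ is increasing with respect to Atanassov's partial order $\subset$, i.e., for all $\alpha,\beta\in\tilde{\mathbb{I}}$ with $\alpha\subset\beta$, $f(\alpha)\le f(\beta)$.
   Context: Elements $\alpha=\langle\mu_\alpha,\nu_\alpha\rangle\in\tilde{\mathbb{I}}$ are called intuitionistic fuzzy values (IFVs). Atanassov's partial order on $\tilde{\mathbb{I}}$ is defined by $\langle\mu_1,\nu_1\rangle\subset\langle\mu_2,\nu_2\rangle$ if and only if $\mu_1\le\mu_2$ and $\nu_1\ge\nu_2$. *)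

theory Defs
  imports "HOL-Analysis.Analysis"
begin

definition IFV_set :: "(real \<times> real) set" where
  "IFV_set = {(\<mu>, \<nu>). 0 \<le> \<mu> \<and> \<mu> \<le> 1 \<and> 0 \<le> \<nu> \<and> \<nu> \<le> 1 \<and> \<mu> + \<nu> \<le> 1}"

definition atanassov_le :: "real \<times> real \<Rightarrow> real \<times> real \<Rightarrow> bool" where
  "atanassov_le a b \<longleftrightarrow> fst a \<le> fst b \<and> snd a \<ge> snd b"

end

theory Submission
  imports Defs
begin

lemma ivt_path:
  fixes f :: "real \<times> real \<Rightarrow> real" and g :: "real \<Rightarrow> real \<times> real"
  assumes cf: "continuous_on IFV_set f" and cg: "continuous_on {0..1} g"
    and sub: "g ` {0..1} \<subseteq> IFV_set"
    and y: "f (g 0) \<le> y" "y \<le> f (g 1)"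
  shows "\<exists>t. 0 \<le> t \<and> t \<le> 1 \<and> f (g t) = y"
proof -
  have "continuous_on {0..1} (f \<circ> g)"
    using continuous_on_compose[OF cg] continuous_on_subset[OF cf sub] by blast
  then show ?thesis using IVT'[of "f \<circ> g" 0 y 1] y by auto
qed

theorem theorem3:
  "\<not> (\<exists>f :: real \<times> real \<Rightarrow> real.
        continuous_on IFV_set f \<and>
        inj_on f IFV_set \<and>
        (\<forall>a\<in>IFV_set. \<forall>b\<in>IFV_set. atanassov_le a b \<longrightarrow> f a \<le> f b))"
proof
  assume "\<exists>f :: real \<times> real \<Rightarrow> real.
        continuous_on IFV_set f \<and>
        inj_on f IFV_set \<and>
        (\<forall>a\<in>IFV_set. \<forall>b\<in>IFV_set. atanassov_le a b \<longrightarrow> f a \<le> f b)"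
  then obtain f :: "real \<times> real \<Rightarrow> real" where cf: "continuous_on IFV_set f"
    and inj: "inj_on f IFV_set"
    and mono: "\<forall>a\<in>IFV_set. \<forall>b\<in>IFV_set. atanassov_le a b \<longrightarrow> f a \<le> f b" by blast
  define A where "A = ((0::real), (0::real))"
  define B where "B = ((1/2::real), (1/2::real))"
  define C where "C = ((1/2::real), (0::real))"
  have AI: "A \<in> IFV_set" and BI: "B \<in> IFV_set" and CI: "C \<in> IFV_set"
    by (auto simp: A_def B_def C_def IFV_set_def)
  have "f A \<le> f C" using mono AI CI by (auto simp: atanassov_le_def A_def C_def)
  moreover have "f B \<le> f C" using mono BI CI by (auto simp: atanassov_le_def B_def C_def)
  moreover have "f A \<noteq> f B" proof
    assume "f A = f B" then have "A = B" using inj AI BI by (auto simp: inj_on_def)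
    then show False by (simp add: A_def B_def)
  qed
  ultimately consider "f A < f B" "f B \<le> f C" | "f B < f A" "f A \<le> f C" by linarith
  then show False
  proof cases
    case 1
    define g where "g = (\<lambda>t::real. (t/2, (0::real)))"
    have "continuous_on {0..1} g" unfolding g_def by (intro continuous_intros) auto
    moreover have "g ` {0..1} \<subseteq> IFV_set" by (auto simp: g_def IFV_set_def field_simps)
    moreover have "g 0 = A" "g 1 = C" by (auto simp: g_def A_def C_def)
    ultimately obtain t where t: "0 \<le> t" "t \<le> 1" "f (g t) = f B"
      using ivt_path[OF cf, of g "f B"] 1 by auto
    have "g t \<in> IFV_set" using t by (auto simp: g_def IFV_set_def field_simps)
    then have "g t = B" using inj BI t(3) by (auto simp: inj_on_def)
    then show False by (simp add: g_def B_def)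
  next
    case 2
    define g where "g = (\<lambda>t::real. ((1/2::real), (1-t)/2))"
    have "continuous_on {0..1} g" unfolding g_def by (intro continuous_intros) auto
    moreover have "g ` {0..1} \<subseteq> IFV_set" by (auto simp: g_def IFV_set_def field_simps)
    moreover have "g 0 = B" "g 1 = C" by (auto simp: g_def B_def C_def)
    ultimately obtain t where t: "0 \<le> t" "t \<le> 1" "f (g t) = f A"
      using ivt_path[OF cf, of g "f A"] 2 by auto
    have "g t \<in> IFV_set" using t by (auto simp: g_def IFV_set_def field_simps)
    then have "g t = A" using inj AI t(3) by (auto simp: inj_on_def)
    then show False by (simp add: g_def A_def)
  qed
qed

end
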